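(* Let $\mathfrak g$ be a complete locally convex complex Lie algebra with a smooth $1$-periodic action $\alpha\colon\mathbb R\to\mathrm{Aut}(\mathfrak g)$ (i.e. $\alpha$ factors through an action of $\mathbb T\cong\mathbb R/\mathbb Z$), and let $D:=\frac{d}{dt}|_{t=0}\alpha_t$ be the corresponding derivation. Then $D$ is admissible.
   Context: A continuous derivation $D$ of a locally convex Lie algebra $\mathfrak g$ is admissible if $D\mathfrak g\subseteq\mathfrak g$ is a closed subspace and the surjections $D\colon\mathfrak g\to D\mathfrak g$ and $q\colon\mathfrak g\to\mathrm{Coker}(D)=\mathfrak g/D\mathfrak g$ admit continuous linear sections $I\colon D\mathfrak g\to\mathfrak g$ and $\sigma\colon\mathrm{Coker}(D)\to\mathfrak g$, so that $\mathfrak g\cong\mathrm{Ker}(D)\oplus ID\mathfrak g$ and $\mathfrak g\cong D\mathfrak g\oplus\sigma q\mathfrak g$ as locally convex spaces. *)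

theory Defs
  imports "HOL-Analysis.Analysis"
begin

definition cvs_structure :: "(complex \<Rightarrow> 'a::real_vector \<Rightarrow> 'a) \<Rightarrow> bool" where
  "cvs_structure cs \<longleftrightarrow>
     (\<forall>c d x. cs (c + d) x = cs c x + cs d x) \<and>
     (\<forall>c x y. cs c (x + y) = cs c x + cs c y) \<and>
     (\<forall>c d x. cs (c * d) x = cs c (cs d x)) \<and>
     (\<forall>r x. cs (complex_of_real r) x = r *\<^sub>R x)"

definition clinear_map :: "(complex \<Rightarrow> 'a::real_vector \<Rightarrow> 'a) \<Rightarrow> ('a \<Rightarrow> 'a) \<Rightarrow> bool" where
  "clinear_map cs f \<longleftrightarrow> (\<forall>x y. f (x + y) = f x + f y) \<and> (\<forall>c x. f (cs c x) = cs c (f x))"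

definition seminorm_on :: "(complex \<Rightarrow> 'a::real_vector \<Rightarrow> 'a) \<Rightarrow> ('a \<Rightarrow> real) \<Rightarrow> bool" where
  "seminorm_on cs p \<longleftrightarrow> (\<forall>x y. p (x + y) \<le> p x + p y) \<and> (\<forall>c x. p (cs c x) = cmod c * p x)"

definition locally_convex :: "(complex \<Rightarrow> 'a::{real_vector,topological_space} \<Rightarrow> 'a) \<Rightarrow> ('a \<Rightarrow> real) set \<Rightarrow> bool" where
  "locally_convex cs P \<longleftrightarrow>
     (\<forall>p\<in>P. seminorm_on cs p) \<and>
     (\<forall>x. x \<noteq> 0 \<longrightarrow> (\<exists>p\<in>P. p x \<noteq> 0)) \<and>
     (\<forall>U. open U \<longleftrightarrow>
        (\<forall>x\<in>U. \<exists>F e. finite F \<and> F \<subseteq> P \<and> e > 0 \<and> {y. \<forall>p\<in>F. p (y - x) < e} \<subseteq> U))"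

text \<open>Completeness: every Cauchy filter (w.r.t. the canonical uniformity of the
  topological vector space) converges.\<close>
definition tvs_complete :: "'a::{real_vector,topological_space} itself \<Rightarrow> bool" where
  "tvs_complete _ \<longleftrightarrow>
     (\<forall>F :: 'a filter. F \<noteq> bot \<longrightarrow>
        (\<forall>U. open U \<and> 0 \<in> U \<longrightarrow> (\<forall>\<^sub>F z in F \<times>\<^sub>F F. fst z - snd z \<in> U)) \<longrightarrow>
        (\<exists>l. F \<le> nhds l))"

definition complex_lie_algebra :: "(complex \<Rightarrow> 'a::real_vector \<Rightarrow> 'a) \<Rightarrow> ('a \<Rightarrow> 'a \<Rightarrow> 'a) \<Rightarrow> bool" where
  "complex_lie_algebra cs b \<longleftrightarrow>
     (\<forall>x. clinear_map cs (b x)) \<and> (\<forall>y. clinear_map cs (\<lambda>x. b x y)) \<and>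
     (\<forall>x. b x x = 0) \<and>
     (\<forall>x y z. b x (b y z) + b y (b z x) + b z (b x y) = 0)"

definition lie_aut :: "(complex \<Rightarrow> 'a::{real_vector,topological_space} \<Rightarrow> 'a) \<Rightarrow> ('a \<Rightarrow> 'a \<Rightarrow> 'a) \<Rightarrow> ('a \<Rightarrow> 'a) \<Rightarrow> bool" where
  "lie_aut cs b f \<longleftrightarrow> clinear_map cs f \<and> bij f \<and> (\<forall>x y. f (b x y) = b (f x) (f y)) \<and>
     continuous_on UNIV f \<and> continuous_on UNIV (inv f)"

definition dir_deriv :: "('a::{real_vector,topological_space} \<Rightarrow> 'b::{real_vector,topological_space}) \<Rightarrow> 'a \<Rightarrow> 'a \<Rightarrow> 'b \<Rightarrow> bool" where
  "dir_deriv f x v L \<longleftrightarrow> ((\<lambda>h::real. (1 / h) *\<^sub>R (f (x + h *\<^sub>R v) - f x)) \<longlongrightarrow> L) (at 0)"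

text \<open>Bastiani smoothness: all iterated directional derivatives
  d^k f(x; v_0,...,v_{k-1}) exist and are jointly continuous in (x, v_0, ..., v_{k-1}).
  The directions are packaged in a sequence vs (only the first k entries are used).\<close>
definition bastiani_smooth :: "('a::{real_vector,topological_space} \<Rightarrow> 'b::{real_vector,topological_space}) \<Rightarrow> bool" where
  "bastiani_smooth f \<longleftrightarrow>
     (\<exists>d :: nat \<Rightarrow> 'a \<Rightarrow> (nat \<Rightarrow> 'a) \<Rightarrow> 'b.
        (\<forall>x vs. d 0 x vs = f x) \<and>
        (\<forall>k x vs. dir_deriv (\<lambda>y. d k y vs) x (vs k) (d (Suc k) x vs)) \<and>
        (\<forall>k x vs ws. (\<forall>i<k. vs i = ws i) \<longrightarrow> d k x vs = d k x ws) \<and>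
        (\<forall>k. continuous_on UNIV (\<lambda>z. d k (fst z) (snd z))))"

definition coset :: "('a::real_vector \<Rightarrow> 'a) \<Rightarrow> 'a \<Rightarrow> 'a set" where
  "coset D x = (\<lambda>y. x + y) ` range D"

text \<open>Quotient topology on Coker(D) = g / D g (cosets).\<close>
definition coker_topology :: "('a::{real_vector,topological_space} \<Rightarrow> 'a) \<Rightarrow> 'a set topology" where
  "coker_topology D =
     topology (\<lambda>S. S \<subseteq> range (coset D) \<and> open {x. coset D x \<in> S})"

definition admissible_derivation ::
  "(complex \<Rightarrow> 'a::{real_vector,topological_space} \<Rightarrow> 'a) \<Rightarrow> ('a \<Rightarrow> 'a \<Rightarrow> 'a) \<Rightarrow> ('a \<Rightarrow> 'a) \<Rightarrow> bool" where
  "admissible_derivation cs b D \<longleftrightarrow>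
     clinear_map cs D \<and> continuous_on UNIV D \<and>
     (\<forall>x y. D (b x y) = b (D x) y + b x (D y)) \<and>
     closed (range D) \<and>
     (\<exists>I. (\<forall>y\<in>range D. \<forall>z\<in>range D. I (y + z) = I y + I z) \<and>
          (\<forall>c. \<forall>y\<in>range D. I (cs c y) = cs c (I y)) \<and>
          continuous_on (range D) I \<and>
          (\<forall>y\<in>range D. D (I y) = y)) \<and>
     (\<exists>\<sigma>. (\<forall>x y. \<sigma> (coset D (x + y)) = \<sigma> (coset D x) + \<sigma> (coset D y)) \<and>
          (\<forall>c x. \<sigma> (coset D (cs c x)) = cs c (\<sigma> (coset D x))) \<and>
          continuous_map (coker_topology D) euclidean \<sigma> \<and>
          (\<forall>x. coset D (\<sigma> (coset D x)) = coset D x))"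

end

theory Submission
  imports Defs
begin


locale lcs =
  fixes cs :: "complex \<Rightarrow> 'a::{real_vector,topological_space} \<Rightarrow> 'a"
    and P :: "('a \<Rightarrow> real) set"
  assumes cvs: "cvs_structure cs" and lc: "locally_convex cs P"
begin

lemma cs_real: "cs (complex_of_real r) x = r *\<^sub>R x"
  using cvs unfolding cvs_structure_def by blast

lemma cs_add2: "cs c (x + y) = cs c x + cs c y"
  using cvs unfolding cvs_structure_def by blast

lemma cs_mult: "cs (c * d) x = cs c (cs d x)"
  using cvs unfolding cvs_structure_def by blast

lemma cs_scaleR_comm: "cs c (r *\<^sub>R x) = r *\<^sub>R cs c x"
proof -
  have "cs c (r *\<^sub>R x) = cs (c * complex_of_real r) x" by (simp only: cs_mult cs_real)
  also have "\<dots> = cs (complex_of_real r * c) x" by (simp only: mult.commute)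
  also have "\<dots> = r *\<^sub>R cs c x" by (simp only: cs_mult cs_real)
  finally show ?thesis .
qed

lemma lc1: "\<forall>p\<in>P. seminorm_on cs p"
  using conjunct1[OF lc[unfolded locally_convex_def]] .
lemma lc2: "\<forall>x. x \<noteq> 0 \<longrightarrow> (\<exists>p\<in>P. p x \<noteq> 0)"
  using conjunct1[OF conjunct2[OF lc[unfolded locally_convex_def]]] .
lemma lc3: "\<forall>U. open U \<longleftrightarrow>
        (\<forall>x\<in>U. \<exists>F e. finite F \<and> F \<subseteq> P \<and> e > 0 \<and> {y. \<forall>p\<in>F. p (y - x) < e} \<subseteq> U)"
  using conjunct2[OF conjunct2[OF lc[unfolded locally_convex_def]]] .

lemma sn: "p \<in> P \<Longrightarrow> seminorm_on cs p"
  using lc1 by blast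

lemma sn_add: "p \<in> P \<Longrightarrow> p (x + y) \<le> p x + p y"
  using sn unfolding seminorm_on_def by blast

lemma sn_cs: "p \<in> P \<Longrightarrow> p (cs c x) = cmod c * p x"
  using sn unfolding seminorm_on_def by blast

lemma sn_scaleR: "p \<in> P \<Longrightarrow> p (r *\<^sub>R x) = \<bar>r\<bar> * p x"
  using sn_cs[of p "complex_of_real r" x] by (simp add: cs_real)

lemma sn_zero: "p \<in> P \<Longrightarrow> p 0 = 0"
  using sn_scaleR[of p 0 0] by simp

lemma sn_minus: "p \<in> P \<Longrightarrow> p (- x) = p x"
  using sn_scaleR[of p "-1" x] by simp

lemma sn_nonneg: "p \<in> P \<Longrightarrow> 0 \<le> p x"
  using sn_add[of p x "-x"] sn_minus[of p x] sn_zero[of p] by simp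

lemma sn_diff_commute: "p \<in> P \<Longrightarrow> p (x - y) = p (y - x)"
  using sn_minus[of p "x - y"] by simp

lemma sn_diff_tri: "p \<in> P \<Longrightarrow> p (x - z) \<le> p (x - y) + p (y - z)"
  using sn_add[of p "x - y" "y - z"] by simp

lemma sn_diff_le: "p \<in> P \<Longrightarrow> p x \<le> p (x - y) + p y"
  using sn_add[of p "x - y" y] by simp

lemma sn_sum: "p \<in> P \<Longrightarrow> p (\<Sum>i\<in>A. f i) \<le> (\<Sum>i\<in>A. p (f i))"
proof (induction A rule: infinite_finite_induct)
  case (infinite A) then show ?case by (simp add: sn_zero)
next
  case empty then show ?case by (simp add: sn_zero)
next
  case (insert x F)
  then show ?case using sn_add[of p "f x" "sum f F"] by simp
qed

lemma sep: "(\<And>p. p \<in> P \<Longrightarrow> p x = 0) \<Longrightarrow> x = 0"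
  using lc2 by blast

lemma open_iff: "open U \<longleftrightarrow>
        (\<forall>x\<in>U. \<exists>F e. finite F \<and> F \<subseteq> P \<and> e > 0 \<and> {y. \<forall>p\<in>F. p (y - x) < e} \<subseteq> U)"
  using lc3 by (rule spec)

lemma open_ball: assumes "p \<in> P" shows "open {y. p (y - x) < e}"
  unfolding open_iff
proof
  fix y assume y: "y \<in> {y. p (y - x) < e}"
  show "\<exists>F e'. finite F \<and> F \<subseteq> P \<and> e' > 0 \<and> {z. \<forall>q\<in>F. q (z - y) < e'} \<subseteq> {y. p (y - x) < e}"
  proof (intro exI conjI)
    show "finite {p}" "{p} \<subseteq> P" using assms by auto
    show "e - p (y - x) > 0" using y by simp
    show "{z. \<forall>q\<in>{p}. q (z - y) < e - p (y - x)} \<subseteq> {y. p (y - x) < e}"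
    proof
      fix z assume "z \<in> {z. \<forall>q\<in>{p}. q (z - y) < e - p (y - x)}"
      then have "p (z - y) < e - p (y - x)" by simp
      then show "z \<in> {y. p (y - x) < e}" using sn_diff_tri[OF assms, of z x y] by simp
    qed
  qed
qed

lemma tendsto_iff:
  fixes f :: "'b \<Rightarrow> 'a"
  shows "(f \<longlongrightarrow> l) F \<longleftrightarrow> (\<forall>p\<in>P. \<forall>e>0. eventually (\<lambda>x. p (f x - l) < e) F)"
proof
  assume "(f \<longlongrightarrow> l) F"
  then show "\<forall>p\<in>P. \<forall>e>0. eventually (\<lambda>x. p (f x - l) < e) F"
    using topological_tendstoD[of f l F "{y. p (y - l) < e}" for p e] open_ball sn_zero by fastforce
next
  assume H: "\<forall>p\<in>P. \<forall>e>0. eventually (\<lambda>x. p (f x - l) < e) F"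
  show "(f \<longlongrightarrow> l) F"
  proof (rule topological_tendstoI)
    fix U assume "open U" "l \<in> U"
    then obtain G e where G: "finite G" "G \<subseteq> P" "e > 0" "{y. \<forall>p\<in>G. p (y - l) < e} \<subseteq> U"
      using open_iff by meson
    have "eventually (\<lambda>x. \<forall>p\<in>G. p (f x - l) < e) F"
      using G H by (intro eventually_ball_finite) auto
    then show "eventually (\<lambda>x. f x \<in> U) F"
      by (rule eventually_mono) (use G in auto)
  qed
qed

lemma tendstoD:
  fixes f :: "'b \<Rightarrow> 'a"
  shows "(f \<longlongrightarrow> l) F \<Longrightarrow> p \<in> P \<Longrightarrow> e > 0 \<Longrightarrow> eventually (\<lambda>x. p (f x - l) < e) F"
  using tendsto_iff by blast

lemma limit_le:
  fixes f :: "'b \<Rightarrow> 'a"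
  assumes "(f \<longlongrightarrow> l) F" "F \<noteq> bot" "p \<in> P" "eventually (\<lambda>x. p (f x - y) \<le> B) F"
  shows "p (l - y) \<le> B"
proof (rule field_le_epsilon)
  fix e :: real assume "e > 0"
  have "eventually (\<lambda>x. p (f x - l) < e \<and> p (f x - y) \<le> B) F"
    using tendstoD[OF assms(1,3) \<open>e>0\<close>] assms(4) by (rule eventually_conj)
  then obtain x where "p (f x - l) < e" "p (f x - y) \<le> B"
    using assms(2) eventually_happens' by blast
  then show "p (l - y) \<le> B + e"
    using sn_diff_tri[OF assms(3), of l y "f x"] sn_diff_commute[OF assms(3), of l "f x"] by linarith
qed

lemma limit_unique:
  fixes l :: 'a
  assumes "(f \<longlongrightarrow> l) F" "(f \<longlongrightarrow> l') F" "F \<noteq> bot"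
  shows "l = l'"
proof -
  have "l - l' = 0"
  proof (rule sep)
    fix p assume p: "p \<in> P"
    have "p (l - l') \<le> e" if "e > 0" for e
    proof -
      have "eventually (\<lambda>x. p (f x - l') \<le> e) F"
        using tendstoD[OF assms(2) p \<open>e>0\<close>] by (rule eventually_mono) simp
      then show ?thesis using limit_le[OF assms(1,3) p] by blast
    qed
    then have "p (l - l') \<le> 0" by (meson dense not_le)
    then show "p (l - l') = 0" using sn_nonneg[OF p] by (meson antisym)
  qed
  then show ?thesis by simp
qed

lemma tendsto_add:
  fixes f g :: "'b \<Rightarrow> 'a"
  assumes "(f \<longlongrightarrow> a) F" "(g \<longlongrightarrow> b) F"
  shows "((\<lambda>x. f x + g x) \<longlongrightarrow> a + b) F"
  unfolding tendsto_iff
proof (intro ballI allI impI)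
  fix p e assume p: "p \<in> P" and e: "(e::real) > 0"
  have "eventually (\<lambda>x. p (f x - a) < e/2 \<and> p (g x - b) < e/2) F"
    using tendstoD[OF assms(1) p, of "e/2"] tendstoD[OF assms(2) p, of "e/2"] e by (intro eventually_conj) auto
  then show "eventually (\<lambda>x. p (f x + g x - (a + b)) < e) F"
  proof (rule eventually_mono)
    fix x assume "p (f x - a) < e/2 \<and> p (g x - b) < e/2"
    moreover have "f x + g x - (a + b) = (f x - a) + (g x - b)" by simp
    ultimately show "p (f x + g x - (a + b)) < e"
      using sn_add[OF p, of "f x - a" "g x - b"] by (simp only:) linarith
  qed
qed

lemma tendsto_const: "((\<lambda>x. c) \<longlongrightarrow> c) F"
  by (rule Topological_Spaces.tendsto_const)

lemma tendsto_linear_bound: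
  fixes f :: "'b \<Rightarrow> 'a" and T :: "'a \<Rightarrow> 'a"
  assumes lin: "\<And>x y. T (x + y) = T x + T y" "\<And>r x. T (r *\<^sub>R x) = r *\<^sub>R T x"
    and bd: "\<forall>p\<in>P. \<exists>G C. finite G \<and> G \<subseteq> P \<and> (\<forall>x. p (T x) \<le> C * (\<Sum>q\<in>G. q x))"
    and f: "(f \<longlongrightarrow> a) F"
  shows "((\<lambda>x. T (f x)) \<longlongrightarrow> T a) F"
  unfolding tendsto_iff
proof (intro ballI allI impI)
  fix p e assume p: "p \<in> P" and e: "(e::real) > 0"
  from bd p obtain G C where G: "finite G" "G \<subseteq> P" "\<And>x. p (T x) \<le> C * (\<Sum>q\<in>G. q x)"
    by (meson bspec)
  define C' where "C' = \<bar>C\<bar> + 1"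
  have C': "C' > 0" unfolding C'_def by simp
  define d where "d = e / (C' * (real (card G) + 1))"
  have d: "d > 0" using e C' unfolding d_def by simp
  have "eventually (\<lambda>x. \<forall>q\<in>G. q (f x - a) < d) F"
    using G tendstoD[OF f _ d] by (intro eventually_ball_finite) auto
  then show "eventually (\<lambda>x. p (T (f x) - T a) < e) F"
  proof (rule eventually_mono)
    fix x assume H: "\<forall>q\<in>G. q (f x - a) < d"
    have Tm: "T (f x) - T a = T (f x - a)"
      using lin(1)[of "f x - a" a] by simp
    have "(\<Sum>q\<in>G. q (f x - a)) \<le> (\<Sum>q\<in>G. d)"
      using H by (intro sum_mono) auto
    also have "\<dots> = real (card G) * d" by simp
    finally have S: "(\<Sum>q\<in>G. q (f x - a)) \<le> real (card G) * d" .
    have S0: "0 \<le> (\<Sum>q\<in>G. q (f x - a))"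
      using G(2) sn_nonneg by (intro sum_nonneg) auto
    have "p (T (f x - a)) \<le> C * (\<Sum>q\<in>G. q (f x - a))" by (rule G(3))
    also have "\<dots> \<le> C' * (\<Sum>q\<in>G. q (f x - a))"
      using S0 unfolding C'_def by (intro mult_right_mono) auto
    also have "\<dots> \<le> C' * (real (card G) * d)"
      using S C' by (intro mult_left_mono) auto
    also have "\<dots> < e"
    proof -
      have "C' * (real (card G) * d) = e * (real (card G) / (real (card G) + 1))"
        unfolding d_def using C' by (simp add: divide_simps)
      also have "\<dots> < e * 1" using e by (intro mult_strict_left_mono) auto
      finally show ?thesis by simp
    qed
    finally show "p (T (f x) - T a) < e" using Tm by simp
  qed
qed

lemma continuous_linear_bound:
  fixes T :: "'a \<Rightarrow> 'a"
  assumes lin: "\<And>x y. T (x + y) = T x + T y" "\<And>r x. T (r *\<^sub>R x) = r *\<^sub>R T x"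
    and bd: "\<forall>p\<in>P. \<exists>G C. finite G \<and> G \<subseteq> P \<and> (\<forall>x. p (T x) \<le> C * (\<Sum>q\<in>G. q x))"
  shows "continuous_on UNIV T"
  unfolding continuous_on_def
proof
  fix x :: 'a
  have "((\<lambda>y. y) \<longlongrightarrow> x) (at x within UNIV)" by (rule tendsto_ident_at)
  then show "(T \<longlongrightarrow> T x) (at x within UNIV)"
    using tendsto_linear_bound[OF lin bd] by blast
qed

lemma tendsto_scaleR_const:
  fixes f :: "'b \<Rightarrow> 'a"
  assumes "(f \<longlongrightarrow> a) F" shows "((\<lambda>x. r *\<^sub>R f x) \<longlongrightarrow> r *\<^sub>R a) F"
proof (rule tendsto_linear_bound[where T="\<lambda>x. r *\<^sub>R x", OF _ _ _ assms])
  show "\<forall>p\<in>P. \<exists>G C. finite G \<and> G \<subseteq> P \<and> (\<forall>x. p (r *\<^sub>R x) \<le> C * (\<Sum>q\<in>G. q x))"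
    by (intro ballI exI[of _ "{_}"] exI[of _ "\<bar>r\<bar>"]) (auto simp: sn_scaleR)
qed (auto simp: scaleR_add_right)

lemma tendsto_cs_const:
  fixes f :: "'b \<Rightarrow> 'a"
  assumes "(f \<longlongrightarrow> a) F" shows "((\<lambda>x. cs c (f x)) \<longlongrightarrow> cs c a) F"
proof (rule tendsto_linear_bound[where T="\<lambda>x. cs c x", OF _ _ _ assms])
  show "\<forall>p\<in>P. \<exists>G C. finite G \<and> G \<subseteq> P \<and> (\<forall>x. p (cs c x) \<le> C * (\<Sum>q\<in>G. q x))"
    by (intro ballI exI[of _ "{_}"] exI[of _ "cmod c"]) (auto simp: sn_cs)
qed (auto simp: cs_add2 cs_scaleR_comm)

lemma tendsto_minus:
  fixes f :: "'b \<Rightarrow> 'a"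
  shows "(f \<longlongrightarrow> a) F \<Longrightarrow> ((\<lambda>x. - f x) \<longlongrightarrow> - a) F"
  using tendsto_scaleR_const[of f a F "-1"] by simp

lemma tendsto_diff:
  fixes f g :: "'b \<Rightarrow> 'a"
  shows "(f \<longlongrightarrow> a) F \<Longrightarrow> (g \<longlongrightarrow> b) F \<Longrightarrow> ((\<lambda>x. f x - g x) \<longlongrightarrow> a - b) F"
  using tendsto_add[of f a F "\<lambda>x. - g x" "-b"] tendsto_minus[of g b F] by simp

lemma tendsto_squeeze0:
  fixes f :: "'b \<Rightarrow> 'a"
  assumes "\<And>p e. p \<in> P \<Longrightarrow> e > 0 \<Longrightarrow> eventually (\<lambda>x. p (f x - l) \<le> e) F"
  shows "(f \<longlongrightarrow> l) F"
  unfolding tendsto_iff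
proof (intro ballI allI impI)
  fix p e assume "p \<in> P" "(e::real) > 0"
  then show "eventually (\<lambda>x. p (f x - l) < e) F"
    using assms[of p "e/2"] by (auto elim: eventually_mono)
qed

end


context lcs begin

lemma scale_bound:
  fixes T :: "'a \<Rightarrow> 'a"
  assumes H: "\<And>y. (\<forall>q\<in>G. q y < e) \<Longrightarrow> p (T y) < 1"
    and e: "e > 0" and G: "finite G" "G \<subseteq> P" and p: "p \<in> P"
    and hom: "\<And>r y. T (r *\<^sub>R y) = r *\<^sub>R T y"
  shows "p (T y) \<le> (2 / e) * (\<Sum>q\<in>G. q y)"
proof -
  define S where "S = (\<Sum>q\<in>G. q y)"
  have S0: "S \<ge> 0" unfolding S_def using G sn_nonneg by (intro sum_nonneg) auto
  have qS: "q y \<le> S" if "q \<in> G" for q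
    unfolding S_def using G that sn_nonneg by (intro member_le_sum) auto
  show ?thesis
  proof (cases "S > 0")
    case True
    define r where "r = e / (2 * S)"
    have r: "r > 0" unfolding r_def using True e by simp
    have "\<forall>q\<in>G. q (r *\<^sub>R y) < e"
    proof
      fix q assume q: "q \<in> G"
      have "q (r *\<^sub>R y) = r * q y" using q G r by (simp add: sn_scaleR subsetD)
      also have "\<dots> \<le> r * S" using qS[OF q] r by (intro mult_left_mono) auto
      also have "\<dots> = e / 2" unfolding r_def using True by simp
      finally show "q (r *\<^sub>R y) < e" using e by simp
    qed
    then have "p (T (r *\<^sub>R y)) < 1" by (rule H)
    then have "r * p (T y) < 1" using r p by (simp add: hom sn_scaleR)
    then have "p (T y) < 1 / r" using r by (simp add: field_simps)
    also have "1 / r = (2 / e) * S" unfolding r_def using True e by simp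
    finally show ?thesis unfolding S_def by simp
  next
    case False
    with S0 have "S = 0" by simp
    then have q0: "q y = 0" if "q \<in> G" for q using qS[OF that] G that sn_nonneg[of q y] by auto
    have "p (T y) \<le> 0"
    proof (rule ccontr)
      assume "\<not> p (T y) \<le> 0"
      then have pos: "p (T y) > 0" by simp
      define r where "r = 1 / p (T y)"
      have r: "r > 0" unfolding r_def using pos by simp
      have "\<forall>q\<in>G. q (r *\<^sub>R y) < e" using e G r by (auto simp: sn_scaleR subsetD q0)
      then have "p (T (r *\<^sub>R y)) < 1" by (rule H)
      then have "r * p (T y) < 1" using r p by (simp add: hom sn_scaleR)
      then show False unfolding r_def using pos by simp
    qed
    then show ?thesis using \<open>S = 0\<close> unfolding S_def by simp
  qed
qed

end

locale lcs_complete = lcs cs P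
  for cs :: "complex \<Rightarrow> 'a::{real_vector,topological_space} \<Rightarrow> 'a" and P +
  assumes complete: "tvs_complete TYPE('a)"
begin

lemma cauchy_conv:
  fixes u :: "nat \<Rightarrow> 'a"
  assumes C: "\<forall>p\<in>P. \<forall>e>0. \<exists>N. \<forall>m\<ge>N. \<forall>n\<ge>N. p (u m - u n) < e"
  shows "\<exists>l. u \<longlonglongrightarrow> l"
proof -
  define F where "F = filtermap u sequentially"
  have Fnb: "F \<noteq> bot" unfolding F_def by (simp add: filtermap_bot_iff)
  have FF: "F \<times>\<^sub>F F = filtermap (\<lambda>z. (u (fst z), u (snd z))) (sequentially \<times>\<^sub>F sequentially)"
    unfolding F_def prod_filtermap1 prod_filtermap2 filtermap_filtermap
    by (simp add: apfst_def apsnd_def map_prod_def case_prod_beta)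
  have cond: "\<forall>U. open U \<and> 0 \<in> U \<longrightarrow> (\<forall>\<^sub>F z in F \<times>\<^sub>F F. fst z - snd z \<in> U)"
  proof (intro allI impI)
    fix U :: "'a set" assume U: "open U \<and> 0 \<in> U"
    then obtain G e where G: "finite G" "G \<subseteq> P" "e > 0" "{y. \<forall>p\<in>G. p (y - 0) < e} \<subseteq> U"
      using open_iff by meson
    have "\<forall>q\<in>G. eventually (\<lambda>z. q (u (fst z) - u (snd z)) < e) (sequentially \<times>\<^sub>F sequentially)"
    proof
      fix q assume "q \<in> G"
      then obtain N where "\<forall>m\<ge>N. \<forall>n\<ge>N. q (u m - u n) < e" using C G by blast
      then show "eventually (\<lambda>z. q (u (fst z) - u (snd z)) < e) (sequentially \<times>\<^sub>F sequentially)"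
        unfolding eventually_prod_sequentially by auto
    qed
    then have "eventually (\<lambda>z. \<forall>q\<in>G. q (u (fst z) - u (snd z)) < e) (sequentially \<times>\<^sub>F sequentially)"
      using G(1) by (intro eventually_ball_finite) auto
    then show "\<forall>\<^sub>F z in F \<times>\<^sub>F F. fst z - snd z \<in> U"
      unfolding FF eventually_filtermap
      by (rule eventually_mono) (use G in auto)
  qed
  have H: "F \<noteq> bot \<longrightarrow> (\<forall>U. open U \<and> 0 \<in> U \<longrightarrow> (\<forall>\<^sub>F z in F \<times>\<^sub>F F. fst z - snd z \<in> U)) \<longrightarrow> (\<exists>l. F \<le> nhds l)"
    using complete unfolding tvs_complete_def by (rule spec)
  obtain l where "F \<le> nhds l"
    using mp[OF mp[OF H Fnb] cond] by (elim exE)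
  then show ?thesis unfolding F_def filterlim_def by blast
qed

end



context lcs begin
lemma tendsto_sn0:
  fixes f :: "'b \<Rightarrow> 'a"
  assumes "(f \<longlongrightarrow> l) F" "q \<in> P"
  shows "((\<lambda>x. q (f x - l)) \<longlongrightarrow> (0::real)) F"
proof (rule order_tendstoI)
  fix a :: real assume "a < 0"
  then show "eventually (\<lambda>x. a < q (f x - l)) F"
    using sn_nonneg[OF assms(2)] by (intro always_eventually) (auto intro: less_le_trans)
next
  fix a :: real assume "a > 0"
  then show "eventually (\<lambda>x. q (f x - l) < a) F" using tendstoD[OF assms] by blast
qed
end

locale action = lcs_complete cs P
  for cs :: "complex \<Rightarrow> 'a::{real_vector,topological_space} \<Rightarrow> 'a" and P +
  fixes \<alpha> :: "real \<Rightarrow> 'a \<Rightarrow> 'a"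
  assumes a_add: "\<alpha> t (x + y) = \<alpha> t x + \<alpha> t y"
    and a_cs: "\<alpha> t (cs c x) = cs c (\<alpha> t x)"
    and a0: "\<alpha> 0 = id"
    and a_plus: "\<alpha> (s + t) = \<alpha> s \<circ> \<alpha> t"
    and a_per: "\<alpha> (t + 1) = \<alpha> t"
    and a_cont: "continuous_on UNIV (\<lambda>z. \<alpha> (fst z) (snd z))"
begin

lemma a_scaleR: "\<alpha> t (r *\<^sub>R x) = r *\<^sub>R \<alpha> t x"
  using a_cs[of t "complex_of_real r" x] by (simp only: cs_real)

lemma a_zero: "\<alpha> t 0 = 0"
  using a_scaleR[of t 0 0] by simp

lemma a_minus: "\<alpha> t (- x) = - \<alpha> t x"
  using a_scaleR[of t "-1" x] by simp

lemma a_diff: "\<alpha> t (x - y) = \<alpha> t x - \<alpha> t y"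
  using a_add[of t x "- y"] a_minus[of t y] by simp

lemma a_sum: "\<alpha> t (\<Sum>i\<in>A. f i) = (\<Sum>i\<in>A. \<alpha> t (f i))"
  by (induction A rule: infinite_finite_induct) (auto simp: a_zero a_add)

lemma a_comp: "\<alpha> s (\<alpha> t x) = \<alpha> (s + t) x"
  by (simp add: a_plus)

lemma a_comm: "\<alpha> s (\<alpha> t x) = \<alpha> t (\<alpha> s x)"
  by (simp add: a_comp add.commute)

lemma a_id: "\<alpha> 0 x = x"
  by (simp add: a0)

lemma a_nat: "\<alpha> (t + real n) = \<alpha> t"
proof (induction n)
  case 0 then show ?case by simp
next
  case (Suc n)
  have "t + real (Suc n) = (t + real n) + 1" by simp
  then have "\<alpha> (t + real (Suc n)) = \<alpha> ((t + real n) + 1)" by (simp only:)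
  also have "\<dots> = \<alpha> t" using a_per Suc by simp
  finally show ?case .
qed

lemma a_int: "\<alpha> (t + real_of_int n) = \<alpha> t"
proof (cases "n \<ge> 0")
  case True
  then obtain m where "n = int m" by (metis nonneg_eq_int)
  then show ?thesis using a_nat by simp
next
  case False
  then obtain m where m: "n = - int m" by (metis add.inverse_inverse neg_0_le_iff_le nonneg_eq_int not_le order.strict_iff_order)
  have "\<alpha> t = \<alpha> ((t - real m) + real m)" by simp
  also have "\<dots> = \<alpha> (t - real m)" by (rule a_nat)
  finally show ?thesis using m by simp
qed

lemma a_frac: "\<alpha> t = \<alpha> (t - real_of_int \<lfloor>t\<rfloor>)"
  using a_int[of "t - real_of_int \<lfloor>t\<rfloor>" "\<lfloor>t\<rfloor>"] by simp

lemma equi: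
  assumes p: "p \<in> P"
  shows "\<exists>G C. finite G \<and> G \<subseteq> P \<and> C \<ge> 0 \<and> (\<forall>t x. p (\<alpha> t x) \<le> C * (\<Sum>q\<in>G. q x))"
proof -
  define f where "f = (\<lambda>z. \<alpha> (fst z) (snd z))"
  define V where "V = f -` {y. p (y - 0) < 1}"
  have oV: "open V" unfolding V_def f_def using open_ball[OF p] a_cont by (rule open_vimage)
  have "\<forall>t\<in>{0..1::real}. \<exists>A B. open A \<and> open B \<and> (t, 0) \<in> A \<times> B \<and> A \<times> B \<subseteq> V"
  proof
    fix t :: real
    have "(t, 0) \<in> V" unfolding V_def f_def by (simp add: a_zero sn_zero[OF p])
    then obtain A B where "open A" "open B" "(t, 0) \<in> A \<times> B" "A \<times> B \<subseteq> V"
      using oV by (metis open_prod_elim)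
    then show "\<exists>A B. open A \<and> open B \<and> (t, 0) \<in> A \<times> B \<and> A \<times> B \<subseteq> V" by blast
  qed
  then obtain A B where AB: "\<And>t. t \<in> {0..1::real} \<Longrightarrow> open (A t) \<and> open (B t) \<and> (t, 0) \<in> A t \<times> B t \<and> A t \<times> B t \<subseteq> V"
    by metis
  obtain T where T: "T \<subseteq> {0..1}" "finite T" "{0..1} \<subseteq> (\<Union>t\<in>T. A t)"
  proof (rule compactE_image[OF compact_Icc, of "{0..1}" A])
    show "\<And>t. t \<in> {0..1} \<Longrightarrow> open (A t)" using AB by blast
    show "{0..1} \<subseteq> (\<Union>t\<in>{0..1}. A t)" using AB by blast
  qed blast
  define B0 where "B0 = (\<Inter>t\<in>T. B t)"
  have oB0: "open B0" unfolding B0_def using T AB by (intro open_INT) auto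
  have B00: "0 \<in> B0" unfolding B0_def using T AB by auto
  obtain G e where G: "finite G" "G \<subseteq> P" "e > 0" "{y. \<forall>q\<in>G. q (y - 0) < e} \<subseteq> B0"
    using oB0 B00 open_iff by meson
  have H: "p (\<alpha> s y) < 1" if y: "\<forall>q\<in>G. q y < e" for s y
  proof -
    define s' where "s' = s - real_of_int \<lfloor>s\<rfloor>"
    have s1: "s' \<le> 1" unfolding s'_def
      using real_of_int_floor_add_one_gt[of s] by linarith
    have s0: "0 \<le> s'" unfolding s'_def
      using of_int_floor_le[of s] by linarith
    have s': "s' \<in> {0..1}" using s0 s1 by simp
    then obtain t where t: "t \<in> T" "s' \<in> A t" using T by blast
    have "y \<in> B0" using G y by auto
    then have "y \<in> B t" using t unfolding B0_def by blast
    then have "(s', y) \<in> V" using AB[of t] t T by blast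
    then have "p (\<alpha> s' y) < 1" unfolding V_def f_def by simp
    then show ?thesis using a_frac[of s] unfolding s'_def by simp
  qed
  have "\<forall>t x. p (\<alpha> t x) \<le> (2 / e) * (\<Sum>q\<in>G. q x)"
  proof (intro allI)
    fix t x
    show "p (\<alpha> t x) \<le> (2 / e) * (\<Sum>q\<in>G. q x)"
      by (rule scale_bound[OF _ G(3) G(1) G(2) p]) (auto intro: H simp: a_scaleR)
  qed
  then show ?thesis using G \<open>e > 0\<close> by (intro exI[of _ G] exI[of _ "2/e"]) auto
qed

lemma cont0: "((\<lambda>h. \<alpha> h x) \<longlongrightarrow> x) (at (0::real))"
proof -
  have c: "continuous_on UNIV (\<lambda>h::real. \<alpha> h x)"
    using continuous_on_compose[OF continuous_on_Pair[OF continuous_on_id continuous_on_const, of UNIV x] continuous_on_subset[OF a_cont]]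
    by (simp add: o_def)
  then have "((\<lambda>h. \<alpha> h x) \<longlongrightarrow> \<alpha> 0 x) (at (0::real) within UNIV)"
    unfolding continuous_on_def by blast
  then show ?thesis by (simp add: a_id)
qed

lemma unifcont:
  assumes p: "p \<in> P" and e: "e > 0"
  shows "\<exists>d>0. \<forall>s t. \<bar>s - t\<bar> < d \<longrightarrow> p (\<alpha> s x - \<alpha> t x) < e"
proof -
  obtain G C where G: "finite G" "G \<subseteq> P" "C \<ge> 0" "\<And>t x. p (\<alpha> t x) \<le> C * (\<Sum>q\<in>G. q x)"
    using equi[OF p] by blast
  have "((\<lambda>h. C * (\<Sum>q\<in>G. q (\<alpha> h x - x))) \<longlongrightarrow> C * (\<Sum>q\<in>G. 0)) (at (0::real))"
    using G(2) by (intro tendsto_mult tendsto_sum Topological_Spaces.tendsto_const tendsto_sn0[OF cont0]) auto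
  then have "eventually (\<lambda>h. C * (\<Sum>q\<in>G. q (\<alpha> h x - x)) < e) (at (0::real))"
    using e by (intro order_tendstoD(2)) auto
  then obtain d where d: "d > 0" "\<And>h. h \<noteq> 0 \<Longrightarrow> dist h 0 < d \<Longrightarrow> C * (\<Sum>q\<in>G. q (\<alpha> h x - x)) < e"
    unfolding eventually_at by auto
  show ?thesis
  proof (intro exI[of _ d] conjI allI impI)
    show "d > 0" by fact
    fix s t :: real assume st: "\<bar>s - t\<bar> < d"
    show "p (\<alpha> s x - \<alpha> t x) < e"
    proof (cases "s = t")
      case True then show ?thesis using e sn_zero[OF p] by simp
    next
      case False
      have eq: "\<alpha> s x - \<alpha> t x = \<alpha> t (\<alpha> (s - t) x - x)"
        by (simp add: a_diff a_comp)
      have "p (\<alpha> s x - \<alpha> t x) \<le> C * (\<Sum>q\<in>G. q (\<alpha> (s - t) x - x))"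
        unfolding eq by (rule G(4))
      also have "\<dots> < e" using d(2)[of "s - t"] False st by (simp add: dist_real_def)
      finally show ?thesis .
    qed
  qed
qed

end


lemma sum_lessThan_add:
  fixes f :: "nat \<Rightarrow> 'b::comm_monoid_add"
  shows "(\<Sum>i<a + b. f i) = (\<Sum>i<a. f i) + (\<Sum>j<b. f (a + j))"
  by (induction b) (simp_all add: add.assoc)

lemma sum_split_mult:
  fixes f :: "nat \<Rightarrow> 'b::comm_monoid_add"
  shows "(\<Sum>i<M * K. f i) = (\<Sum>k<M. \<Sum>j<K. f (k * K + j))"
proof (induction M)
  case 0 then show ?case by simp
next
  case (Suc M)
  have "(\<Sum>i<Suc M * K. f i) = (\<Sum>i<M * K + K. f i)" by (simp add: add.commute)
  also have "\<dots> = (\<Sum>i<M * K. f i) + (\<Sum>j<K. f (M * K + j))" by (rule sum_lessThan_add)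
  also have "\<dots> = (\<Sum>k<Suc M. \<Sum>j<K. f (k * K + j))" using Suc by simp
  finally show ?case .
qed

context lcs begin

lemma cs_sum: "cs c (\<Sum>i\<in>A. f i) = (\<Sum>i\<in>A. cs c (f i))"
proof (induction A rule: infinite_finite_induct)
  case (infinite A) then show ?case using cs_real[of 0 0] cs_scaleR_comm[of c 0 0] by simp
next
  case empty then show ?case using cs_scaleR_comm[of c 0 0] by simp
next
  case (insert x F) then show ?case by (simp add: cs_add2)
qed

definition Lim :: "(nat \<Rightarrow> 'a) \<Rightarrow> 'a" where "Lim u = (THE l. u \<longlonglongrightarrow> l)"

lemma Lim_eq: "u \<longlonglongrightarrow> l \<Longrightarrow> Lim u = l"
  unfolding Lim_def by (rule the_equality) (auto intro: limit_unique)

lemma Lim_conv: "\<exists>l. u \<longlonglongrightarrow> l \<Longrightarrow> u \<longlonglongrightarrow> Lim u"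
  using Lim_eq by auto

definition Rs :: "(real \<Rightarrow> 'a) \<Rightarrow> nat \<Rightarrow> 'a" where
  "Rs g M = (1 / real M) *\<^sub>R (\<Sum>k<M. g (real k / real M))"

lemma riemann_step:
  assumes p: "p \<in> P" and M: "M > 0" and K: "K > 0"
    and H: "\<And>s t. s \<in> {0..1} \<Longrightarrow> t \<in> {0..1} \<Longrightarrow> \<bar>s - t\<bar> < d \<Longrightarrow> p (g s - g t) \<le> e"
    and Md: "1 / real M < d"
  shows "p (Rs g M - Rs g (M * K)) \<le> e"
proof -
  define c where "c = 1 / (real M * real K)"
  have c: "c > 0" unfolding c_def using M K by simp
  have s1: "(\<Sum>k<M. \<Sum>j<K. g (real k / real M)) = real K *\<^sub>R (\<Sum>k<M. g (real k / real M))"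
    by (simp add: scaleR_sum_right sum_constant_scaleR)
  have e1: "Rs g M = c *\<^sub>R (\<Sum>k<M. \<Sum>j<K. g (real k / real M))"
    unfolding Rs_def c_def s1 scaleR_scaleR using K by simp
  have e2: "Rs g (M * K) = c *\<^sub>R (\<Sum>k<M. \<Sum>j<K. g (real (k * K + j) / real (M * K)))"
    unfolding Rs_def c_def sum_split_mult by simp
  have diff: "Rs g M - Rs g (M * K) = c *\<^sub>R (\<Sum>k<M. \<Sum>j<K. (g (real k / real M) - g (real (k * K + j) / real (M * K))))"
    unfolding e1 e2 by (simp add: sum_subtractf scaleR_diff_right)
  have tm: "p (g (real k / real M) - g (real (k * K + j) / real (M * K))) \<le> e" if kj: "k < M" "j < K" for k j
  proof (rule H)
    show "real k / real M \<in> {0..1}" using kj M by auto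
    have "k * K + j < M * K"
    proof -
      have "k * K + j < k * K + K" using kj by simp
      also have "\<dots> = Suc k * K" by simp
      also have "\<dots> \<le> M * K" using kj by (intro mult_right_mono) auto
      finally show ?thesis .
    qed
    then have "real (k * K + j) < real (M * K)" by linarith
    then show "real (k * K + j) / real (M * K) \<in> {0..1}" using M K by (auto simp: field_simps)
    have "real k / real M - real (k * K + j) / real (M * K) = - (real j / (real M * real K))"
      using M K by (simp add: field_simps)
    then have "\<bar>real k / real M - real (k * K + j) / real (M * K)\<bar> = real j / (real M * real K)" by simp
    also have "\<dots> < real K / (real M * real K)" using kj M by (intro divide_strict_right_mono) auto
    also have "\<dots> = 1 / real M" using K by simp
    finally show "\<bar>real k / real M - real (k * K + j) / real (M * K)\<bar> < d" using Md by simp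
  qed
  have "p (Rs g M - Rs g (M * K)) = c * p (\<Sum>k<M. \<Sum>j<K. (g (real k / real M) - g (real (k * K + j) / real (M * K))))"
    unfolding diff using c by (simp add: sn_scaleR[OF p])
  also have "\<dots> \<le> c * (\<Sum>k<M. \<Sum>j<K. p (g (real k / real M) - g (real (k * K + j) / real (M * K))))"
  proof (intro mult_left_mono)
    show "0 \<le> c" using c by simp
    show "p (\<Sum>k<M. \<Sum>j<K. (g (real k / real M) - g (real (k * K + j) / real (M * K))))
      \<le> (\<Sum>k<M. \<Sum>j<K. p (g (real k / real M) - g (real (k * K + j) / real (M * K))))"
      by (rule order_trans[OF sn_sum[OF p]], rule sum_mono, rule sn_sum[OF p])
  qed
  also have "\<dots> \<le> c * (\<Sum>k<M. \<Sum>j<K. e)"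
    using c tm by (intro mult_left_mono sum_mono) auto
  also have "\<dots> = e" unfolding c_def using M K by simp
  finally show ?thesis .
qed

end

context lcs_complete begin

lemma riemann_conv:
  assumes U: "\<And>p e. p \<in> P \<Longrightarrow> e > 0 \<Longrightarrow> \<exists>d>0. \<forall>s t. s \<in> {0..1} \<longrightarrow> t \<in> {0..1} \<longrightarrow> \<bar>s - t\<bar> < d \<longrightarrow> p (g s - g t) < e"
  shows "\<exists>l. (\<lambda>M. Rs g M) \<longlonglongrightarrow> l"
proof (rule cauchy_conv, intro ballI allI impI)
  fix p e assume p: "p \<in> P" and e: "(e::real) > 0"
  obtain d where d: "d > 0" "\<And>s t. s \<in> {0..1} \<Longrightarrow> t \<in> {0..1} \<Longrightarrow> \<bar>s - t\<bar> < d \<Longrightarrow> p (g s - g t) < e / 3"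
    using U[OF p, of "e/3"] e by auto
  obtain N :: nat where N: "1 / d < real N" using reals_Archimedean2 by blast
  have Npos: "N > 0" using N d by (cases N) (auto simp: field_simps)
  show "\<exists>N. \<forall>m\<ge>N. \<forall>n\<ge>N. p (Rs g m - Rs g n) < e"
  proof (intro exI[of _ N] allI impI)
    fix m n assume mn: "N \<le> m" "N \<le> n"
    have inv: "1 / real k < d" if "N \<le> k" for k
    proof -
      have "1 / d < real k" using N that by linarith
      moreover have "real k > 0" using Npos that by simp
      ultimately show ?thesis using d by (simp add: field_simps)
    qed
    have H: "p (g s - g t) \<le> e / 3" if "s \<in> {0..1}" "t \<in> {0..1}" "\<bar>s - t\<bar> < d" for s t
      using d(2)[OF that] by simp
    have a: "p (Rs g m - Rs g (m * n)) \<le> e / 3"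
      using riemann_step[OF p _ _ H inv[OF mn(1)]] mn Npos by auto
    have b: "p (Rs g n - Rs g (n * m)) \<le> e / 3"
      using riemann_step[OF p _ _ H inv[OF mn(2)]] mn Npos by auto
    have "p (Rs g m - Rs g n) \<le> p (Rs g m - Rs g (m * n)) + p (Rs g (m * n) - Rs g n)"
      by (rule sn_diff_tri[OF p])
    also have "p (Rs g (m * n) - Rs g n) = p (Rs g n - Rs g (n * m))"
      using sn_diff_commute[OF p] by (simp add: mult.commute)
    finally show "p (Rs g m - Rs g n) < e" using a b e by linarith
  qed
qed

end



context action begin

definition PM :: "'a \<Rightarrow> nat \<Rightarrow> 'a" where "PM x = Rs (\<lambda>t. \<alpha> t x)"
definition JM :: "'a \<Rightarrow> nat \<Rightarrow> 'a" where "JM x = Rs (\<lambda>t. t *\<^sub>R \<alpha> t x)"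
definition Pop :: "'a \<Rightarrow> 'a" where "Pop x = Lim (PM x)"
definition Jop :: "'a \<Rightarrow> 'a" where "Jop x = Lim (JM x)"

lemma a_bound: "p \<in> P \<Longrightarrow> \<exists>B\<ge>0. \<forall>t. p (\<alpha> t x) \<le> B"
proof -
  assume p: "p \<in> P"
  obtain G C where G: "finite G" "G \<subseteq> P" "C \<ge> 0" "\<And>t x. p (\<alpha> t x) \<le> C * (\<Sum>q\<in>G. q x)"
    using equi[OF p] by blast
  have "C * (\<Sum>q\<in>G. q x) \<ge> 0" using G sn_nonneg by (intro mult_nonneg_nonneg sum_nonneg) auto
  then show ?thesis using G(4) by blast
qed

lemma PM_conv: "PM x \<longlonglongrightarrow> Pop x"
proof -
  have "\<exists>l. PM x \<longlonglongrightarrow> l"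
    unfolding PM_def
  proof (rule riemann_conv)
    fix p e assume "p \<in> P" "(e::real) > 0"
    then obtain d where "d > 0" "\<forall>s t. \<bar>s - t\<bar> < d \<longrightarrow> p (\<alpha> s x - \<alpha> t x) < e"
      using unifcont by blast
    then show "\<exists>d>0. \<forall>s t. s \<in> {0..1} \<longrightarrow> t \<in> {0..1} \<longrightarrow> \<bar>s - t\<bar> < d \<longrightarrow> p (\<alpha> s x - \<alpha> t x) < e"
      by blast
  qed
  then show ?thesis unfolding Pop_def by (rule Lim_conv)
qed

lemma JM_conv: "JM x \<longlonglongrightarrow> Jop x"
proof -
  have "\<exists>l. JM x \<longlonglongrightarrow> l"
    unfolding JM_def
  proof (rule riemann_conv)
    fix p e assume p: "p \<in> P" and e: "(e::real) > 0"
    obtain B where B: "B \<ge> 0" "\<And>t. p (\<alpha> t x) \<le> B" using a_bound[OF p] by blast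
    obtain d1 where d1: "d1 > 0" "\<forall>s t. \<bar>s - t\<bar> < d1 \<longrightarrow> p (\<alpha> s x - \<alpha> t x) < e / 2"
      using unifcont[OF p, of "e/2" x] e by (auto simp del: )
    define d where "d = min d1 (e / (2 * (B + 1)))"
    have d: "d > 0" unfolding d_def using d1 e B by simp
    show "\<exists>d>0. \<forall>s t. s \<in> {0..1} \<longrightarrow> t \<in> {0..1} \<longrightarrow> \<bar>s - t\<bar> < d \<longrightarrow> p (s *\<^sub>R \<alpha> s x - t *\<^sub>R \<alpha> t x) < e"
    proof (intro exI[of _ d] conjI allI impI)
      fix s t :: real assume st: "s \<in> {0..1}" "t \<in> {0..1}" "\<bar>s - t\<bar> < d"
      have eq: "s *\<^sub>R \<alpha> s x - t *\<^sub>R \<alpha> t x = s *\<^sub>R (\<alpha> s x - \<alpha> t x) + (s - t) *\<^sub>R \<alpha> t x"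
        by (simp add: algebra_simps)
      have "p (s *\<^sub>R \<alpha> s x - t *\<^sub>R \<alpha> t x) \<le> \<bar>s\<bar> * p (\<alpha> s x - \<alpha> t x) + \<bar>s - t\<bar> * p (\<alpha> t x)"
        unfolding eq using sn_add[OF p, of "s *\<^sub>R (\<alpha> s x - \<alpha> t x)" "(s - t) *\<^sub>R \<alpha> t x"]
        by (simp add: sn_scaleR[OF p])
      also have "\<dots> \<le> 1 * p (\<alpha> s x - \<alpha> t x) + d * B"
      proof (intro add_mono mult_mono)
        show "\<bar>s\<bar> \<le> 1" using st by auto
        show "\<bar>s - t\<bar> \<le> d" using st by simp
      qed (use B sn_nonneg[OF p] d in auto)
      also have "\<dots> < e / 2 + e / 2"
      proof (rule add_less_le_mono)
        show "1 * p (\<alpha> s x - \<alpha> t x) < e / 2" using d1 st d unfolding d_def by auto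
        have "d * B \<le> (e / (2 * (B + 1))) * B" unfolding d_def using B by (intro mult_right_mono) auto
        also have "\<dots> \<le> e / 2"
          using B e by (simp add: field_simps)
        finally show "d * B \<le> e / 2" .
      qed
      finally show "p (s *\<^sub>R \<alpha> s x - t *\<^sub>R \<alpha> t x) < e" by simp
    qed (rule d)
  qed
  then show ?thesis unfolding Jop_def by (rule Lim_conv)
qed

lemma PM_add: "PM (x + y) M = PM x M + PM y M"
  unfolding PM_def Rs_def by (simp add: a_add sum.distrib scaleR_add_right)

lemma JM_add: "JM (x + y) M = JM x M + JM y M"
  unfolding JM_def Rs_def by (simp add: a_add sum.distrib scaleR_add_right)

lemma PM_cs: "PM (cs c x) M = cs c (PM x M)"
  unfolding PM_def Rs_def by (simp add: a_cs cs_sum cs_scaleR_comm)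

lemma JM_cs: "JM (cs c x) M = cs c (JM x M)"
  unfolding JM_def Rs_def by (simp add: a_cs cs_sum cs_scaleR_comm)

lemma Pop_add: "Pop (x + y) = Pop x + Pop y"
proof -
  have "(\<lambda>M. PM (x + y) M) \<longlonglongrightarrow> Pop x + Pop y"
    unfolding PM_add by (intro tendsto_add PM_conv)
  then show ?thesis unfolding Pop_def[of "x+y"] by (simp add: Lim_eq)
qed

lemma Jop_add: "Jop (x + y) = Jop x + Jop y"
proof -
  have "(\<lambda>M. JM (x + y) M) \<longlonglongrightarrow> Jop x + Jop y"
    unfolding JM_add by (intro tendsto_add JM_conv)
  then show ?thesis unfolding Jop_def[of "x+y"] by (simp add: Lim_eq)
qed

lemma Pop_cs: "Pop (cs c x) = cs c (Pop x)"
proof -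
  have "(\<lambda>M. PM (cs c x) M) \<longlonglongrightarrow> cs c (Pop x)"
    unfolding PM_cs by (intro tendsto_cs_const PM_conv)
  then show ?thesis unfolding Pop_def[of "cs c x"] by (simp add: Lim_eq)
qed

lemma Jop_cs: "Jop (cs c x) = cs c (Jop x)"
proof -
  have "(\<lambda>M. JM (cs c x) M) \<longlonglongrightarrow> cs c (Jop x)"
    unfolding JM_cs by (intro tendsto_cs_const JM_conv)
  then show ?thesis unfolding Jop_def[of "cs c x"] by (simp add: Lim_eq)
qed

lemma Pop_scaleR: "Pop (r *\<^sub>R x) = r *\<^sub>R Pop x"
  using Pop_cs[of "complex_of_real r" x] by (simp only: cs_real)

lemma Jop_scaleR: "Jop (r *\<^sub>R x) = r *\<^sub>R Jop x"
  using Jop_cs[of "complex_of_real r" x] by (simp only: cs_real)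

lemma PM_bound:
  assumes p: "p \<in> P" and B: "\<And>t. p (\<alpha> t x) \<le> B" "B \<ge> 0"
  shows "p (PM x M) \<le> B"
proof (cases "M = 0")
  case True then show ?thesis unfolding PM_def Rs_def using B sn_zero[OF p] by simp
next
  case False
  have "p (PM x M) = (1 / real M) * p (\<Sum>k<M. \<alpha> (real k / real M) x)"
    unfolding PM_def Rs_def by (simp add: sn_scaleR[OF p])
  also have "\<dots> \<le> (1 / real M) * (\<Sum>k<M. B)"
    by (intro mult_left_mono order_trans[OF sn_sum[OF p]] sum_mono B) auto
  also have "\<dots> = B" using False by simp
  finally show ?thesis .
qed

lemma JM_bound:
  assumes p: "p \<in> P" and B: "\<And>t. p (\<alpha> t x) \<le> B" "B \<ge> 0"
  shows "p (JM x M) \<le> B"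
proof (cases "M = 0")
  case True then show ?thesis unfolding JM_def Rs_def using B sn_zero[OF p] by simp
next
  case False
  have "p (JM x M) = (1 / real M) * p (\<Sum>k<M. (real k / real M) *\<^sub>R \<alpha> (real k / real M) x)"
    unfolding JM_def Rs_def by (simp add: sn_scaleR[OF p])
  also have "\<dots> \<le> (1 / real M) * (\<Sum>k<M. B)"
  proof (intro mult_left_mono order_trans[OF sn_sum[OF p]] sum_mono)
    fix k assume "k \<in> {..<M}"
    then have k: "real k / real M \<le> 1" "0 \<le> real k / real M" using False by auto
    have "p ((real k / real M) *\<^sub>R \<alpha> (real k / real M) x) = (real k / real M) * p (\<alpha> (real k / real M) x)"
      using k by (simp add: sn_scaleR[OF p])
    also have "\<dots> \<le> 1 * B" using k B sn_nonneg[OF p] by (intro mult_mono) auto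
    finally show "p ((real k / real M) *\<^sub>R \<alpha> (real k / real M) x) \<le> B" by simp
  qed auto
  also have "\<dots> = B" using False by simp
  finally show ?thesis .
qed

lemma op_bound_gen:
  assumes conv: "\<And>x. (u x) \<longlonglongrightarrow> T x"
    and bd: "\<And>p x B M. p \<in> P \<Longrightarrow> (\<And>t. p (\<alpha> t x) \<le> B) \<Longrightarrow> B \<ge> 0 \<Longrightarrow> p (u x M) \<le> B"
  shows "\<forall>p\<in>P. \<exists>G C. finite G \<and> G \<subseteq> P \<and> (\<forall>x. p (T x) \<le> C * (\<Sum>q\<in>G. q x))"
proof
  fix p assume p: "p \<in> P"
  obtain G C where G: "finite G" "G \<subseteq> P" "C \<ge> 0" "\<And>t x. p (\<alpha> t x) \<le> C * (\<Sum>q\<in>G. q x)"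
    using equi[OF p] by blast
  have "p (T x - 0) \<le> C * (\<Sum>q\<in>G. q x)" for x
  proof (rule limit_le[OF conv _ p])
    have "C * (\<Sum>q\<in>G. q x) \<ge> 0" using G sn_nonneg by (intro mult_nonneg_nonneg sum_nonneg) auto
    then show "\<forall>\<^sub>F M in sequentially. p (u x M - 0) \<le> C * (\<Sum>q\<in>G. q x)"
      using bd[OF p G(4)] by simp
  qed simp
  then show "\<exists>G C. finite G \<and> G \<subseteq> P \<and> (\<forall>x. p (T x) \<le> C * (\<Sum>q\<in>G. q x))"
    using G by auto
qed

lemma Pop_bd: "\<forall>p\<in>P. \<exists>G C. finite G \<and> G \<subseteq> P \<and> (\<forall>x. p (Pop x) \<le> C * (\<Sum>q\<in>G. q x))"
  by (rule op_bound_gen[where u=PM and T=Pop]) (rule PM_conv, rule PM_bound)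

lemma Jop_bd: "\<forall>p\<in>P. \<exists>G C. finite G \<and> G \<subseteq> P \<and> (\<forall>x. p (Jop x) \<le> C * (\<Sum>q\<in>G. q x))"
  by (rule op_bound_gen[where u=JM and T=Jop]) (rule JM_conv, rule JM_bound)

lemma a_bd: "\<forall>p\<in>P. \<exists>G C. finite G \<and> G \<subseteq> P \<and> (\<forall>x. p (\<alpha> t x) \<le> C * (\<Sum>q\<in>G. q x))"
proof
  fix p assume p: "p \<in> P"
  obtain G C where G: "finite G" "G \<subseteq> P" "C \<ge> 0" "\<And>t x. p (\<alpha> t x) \<le> C * (\<Sum>q\<in>G. q x)"
    using equi[OF p] by blast
  show "\<exists>G C. finite G \<and> G \<subseteq> P \<and> (\<forall>x. p (\<alpha> t x) \<le> C * (\<Sum>q\<in>G. q x))"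
    by (intro exI[of _ G] exI[of _ C] conjI allI G)
qed

lemma Pop_cont: "continuous_on UNIV Pop"
  by (rule continuous_linear_bound[OF Pop_add Pop_scaleR Pop_bd])

lemma Jop_cont: "continuous_on UNIV Jop"
  by (rule continuous_linear_bound[OF Jop_add Jop_scaleR Jop_bd])

lemma tendsto_a:
  fixes f :: "'b \<Rightarrow> 'a"
  shows "(f \<longlongrightarrow> l) F \<Longrightarrow> ((\<lambda>x. \<alpha> t (f x)) \<longlongrightarrow> \<alpha> t l) F"
  by (rule tendsto_linear_bound[OF a_add a_scaleR a_bd])

lemma tendsto_Pop:
  fixes f :: "'b \<Rightarrow> 'a"
  shows "(f \<longlongrightarrow> l) F \<Longrightarrow> ((\<lambda>x. Pop (f x)) \<longlongrightarrow> Pop l) F"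
  by (rule tendsto_linear_bound[OF Pop_add Pop_scaleR Pop_bd])

end


lemma cyc_shift:
  fixes a :: "nat \<Rightarrow> 'b::ab_group_add"
  assumes per: "\<And>j. a (j + M) = a j"
  shows "(\<Sum>k<M. a (k + m)) = (\<Sum>k<M. a k)"
proof (induction m)
  case 0 then show ?case by simp
next
  case (Suc m)
  have "(\<Sum>k<Suc M. a (k + m)) = (\<Sum>k<M. a (k + m)) + a m"
    using per[of m] by (simp add: add.commute)
  moreover have "(\<Sum>k<Suc M. a (k + m)) = a m + (\<Sum>k<M. a (k + Suc m))"
    unfolding sum.lessThan_Suc_shift by simp
  ultimately have "(\<Sum>k<M. a (k + Suc m)) = (\<Sum>k<M. a (k + m))"
    by (simp add: add.commute)
  then show ?case using Suc by simp
qed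

lemma weighted_shift:
  fixes a :: "nat \<Rightarrow> 'b::real_vector"
  assumes per: "\<And>j. a (j + M) = a j"
  shows "(\<Sum>k<M. real k *\<^sub>R a (k + m)) =
         (\<Sum>k<M. real k *\<^sub>R a k) - real m *\<^sub>R (\<Sum>k<M. a k) + real M *\<^sub>R (\<Sum>k<m. a k)"
proof (induction m)
  case 0 then show ?case by simp
next
  case (Suc m)
  have i: "(\<Sum>k<Suc M. real k *\<^sub>R a (k + m)) = (\<Sum>k<M. real k *\<^sub>R a (k + m)) + real M *\<^sub>R a m"
    using per[of m] by (simp add: add.commute)
  have "(\<Sum>k<Suc M. real k *\<^sub>R a (k + m)) = (\<Sum>k<M. real (Suc k) *\<^sub>R a (k + Suc m))"
    unfolding sum.lessThan_Suc_shift by simp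
  also have "\<dots> = (\<Sum>k<M. real k *\<^sub>R a (k + Suc m)) + (\<Sum>k<M. a (k + Suc m))"
    by (simp add: scaleR_add_left sum.distrib)
  also have "(\<Sum>k<M. a (k + Suc m)) = (\<Sum>k<M. a k)" by (rule cyc_shift[where a=a and M=M, OF per])
  finally have ii: "(\<Sum>k<M. real k *\<^sub>R a (k + Suc m)) = (\<Sum>k<M. real k *\<^sub>R a (k + m)) + real M *\<^sub>R a m - (\<Sum>k<M. a k)"
    using i by (simp add: algebra_simps)
  show ?case unfolding ii Suc by (simp add: algebra_simps)
qed

context lcs begin

lemma cs_diff: "cs c (x - y) = cs c x - cs c y"
  using cs_add2[of c x "- y"] cs_scaleR_comm[of c "-1" y] by simp

end

locale deriv_action = action cs P \<alpha>
  for cs :: "complex \<Rightarrow> 'a::{real_vector,topological_space} \<Rightarrow> 'a" and P and \<alpha> +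
  fixes D :: "'a \<Rightarrow> 'a"
  assumes D_lim: "\<And>x. ((\<lambda>t::real. (1 / t) *\<^sub>R (\<alpha> t x - x)) \<longlongrightarrow> D x) (at 0)"
    and D_cont: "continuous_on UNIV D"
begin

lemma at0_nbot: "at (0::real) \<noteq> bot" by simp

lemma D_add: "D (x + y) = D x + D y"
proof -
  have "((\<lambda>t::real. (1 / t) *\<^sub>R (\<alpha> t (x + y) - (x + y))) \<longlongrightarrow> D x + D y) (at 0)"
    using tendsto_add[OF D_lim[of x] D_lim[of y]] by (simp add: a_add algebra_simps)
  then show ?thesis using D_lim[of "x + y"] limit_unique at0_nbot by blast
qed

lemma D_cs: "D (cs c x) = cs c (D x)"
proof -
  have "((\<lambda>t::real. (1 / t) *\<^sub>R (\<alpha> t (cs c x) - cs c x)) \<longlongrightarrow> cs c (D x)) (at 0)"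
    using tendsto_cs_const[OF D_lim[of x], of c] by (simp add: a_cs cs_diff cs_scaleR_comm)
  then show ?thesis using D_lim[of "cs c x"] limit_unique at0_nbot by blast
qed

lemma D_scaleR: "D (r *\<^sub>R x) = r *\<^sub>R D x"
  using D_cs[of "complex_of_real r" x] by (simp only: cs_real)

lemma D_zero: "D 0 = 0"
  using D_scaleR[of 0 0] by simp

lemma D_sum: "D (\<Sum>i\<in>A. f i) = (\<Sum>i\<in>A. D (f i))"
  by (induction A rule: infinite_finite_induct) (auto simp: D_zero D_add)

lemma D_a: "D (\<alpha> s x) = \<alpha> s (D x)"
proof -
  have "((\<lambda>t::real. (1 / t) *\<^sub>R (\<alpha> t (\<alpha> s x) - \<alpha> s x)) \<longlongrightarrow> \<alpha> s (D x)) (at 0)"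
    using tendsto_a[OF D_lim[of x], of s] by (simp add: a_diff a_scaleR a_comm)
  then show ?thesis using D_lim[of "\<alpha> s x"] limit_unique at0_nbot by blast
qed

lemma tendsto_D:
  fixes f :: "'b \<Rightarrow> 'a"
  shows "(f \<longlongrightarrow> l) F \<Longrightarrow> ((\<lambda>x. D (f x)) \<longlongrightarrow> D l) F"
  using continuous_on_tendsto_compose[OF D_cont, of f l F] by simp

lemma seq_at0: "filterlim (\<lambda>N. 1 / real (Suc N)) (at (0::real)) sequentially"
  unfolding filterlim_at using LIMSEQ_inverse_real_of_nat by (simp add: inverse_eq_divide)

lemma D_seq: "(\<lambda>N. real (Suc N) *\<^sub>R (\<alpha> (1 / real (Suc N)) x - x)) \<longlonglongrightarrow> D x"
  using filterlim_compose[OF D_lim[of x] seq_at0] by simp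

definition aseq :: "'a \<Rightarrow> nat \<Rightarrow> nat \<Rightarrow> 'a" where
  "aseq x M j = \<alpha> (real j / real M) x"

lemma aseq_per: "M > 0 \<Longrightarrow> aseq x M (j + M) = aseq x M j"
proof -
  assume M: "M > 0"
  have "real (j + M) / real M = real j / real M + 1" using M by (simp add: field_simps)
  then show ?thesis unfolding aseq_def by (simp add: a_per)
qed

lemma aseq_shift: "M > 0 \<Longrightarrow> \<alpha> (real m / real M) (aseq x M k) = aseq x M (k + m)"
  unfolding aseq_def by (simp add: a_comp add_divide_distrib add.commute)

lemma PM_aseq: "PM x M = (1 / real M) *\<^sub>R (\<Sum>k<M. aseq x M k)"
  unfolding PM_def Rs_def aseq_def ..

lemma JM_aseq: "JM x M = (1 / real M ^ 2) *\<^sub>R (\<Sum>k<M. real k *\<^sub>R aseq x M k)"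
  unfolding JM_def Rs_def aseq_def by (simp add: scaleR_sum_right power2_eq_square)

lemma PM_shift:
  assumes M: "M > 0"
  shows "\<alpha> (real m / real M) (PM x M) = PM x M"
proof -
  have "(\<Sum>k<M. aseq x M (k + m)) = (\<Sum>k<M. aseq x M k)"
    by (rule cyc_shift[where a="aseq x M" and M=M]) (rule aseq_per[OF M])
  then show ?thesis unfolding PM_aseq by (simp add: a_scaleR a_sum aseq_shift[OF M])
qed

lemma JM_shift:
  assumes M: "M > 0"
  shows "\<alpha> (real m / real M) (JM x M) - JM x M + (real m / real M) *\<^sub>R PM x M
          = (1 / real M) *\<^sub>R (\<Sum>k<m. aseq x M k)"
proof -
  have "\<alpha> (real m / real M) (JM x M) = (1 / real M ^ 2) *\<^sub>R (\<Sum>k<M. real k *\<^sub>R aseq x M (k + m))"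
    unfolding JM_aseq by (simp add: a_scaleR a_sum aseq_shift[OF M])
  also have "\<dots> = (1 / real M ^ 2) *\<^sub>R ((\<Sum>k<M. real k *\<^sub>R aseq x M k) - real m *\<^sub>R (\<Sum>k<M. aseq x M k) + real M *\<^sub>R (\<Sum>k<m. aseq x M k))"
    using weighted_shift[where a="aseq x M" and M=M and m=m, OF aseq_per[OF M]] by simp
  finally show ?thesis
    unfolding JM_aseq PM_aseq using M by (simp add: algebra_simps power2_eq_square)
qed

end


context deriv_action begin

lemma seq_unique: "u \<longlonglongrightarrow> a \<Longrightarrow> u \<longlonglongrightarrow> b \<Longrightarrow> a = b"
  for u :: "nat \<Rightarrow> 'a"
  by (erule limit_unique) simp_all

lemma sub_mono: "N > 0 \<Longrightarrow> strict_mono (\<lambda>n::nat. N * Suc n)"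
  unfolding strict_mono_Suc_iff by simp

lemma PM_sub: "N > 0 \<Longrightarrow> (\<lambda>n. PM x (N * Suc n)) \<longlonglongrightarrow> Pop x"
  using LIMSEQ_subseq_LIMSEQ[OF PM_conv sub_mono] by (simp add: o_def)

lemma JM_sub: "N > 0 \<Longrightarrow> (\<lambda>n. JM x (N * Suc n)) \<longlonglongrightarrow> Jop x"
  using LIMSEQ_subseq_LIMSEQ[OF JM_conv sub_mono] by (simp add: o_def)

lemma ratio: "N > 0 \<Longrightarrow> real (Suc n) / real (N * Suc n) = 1 / real N"
proof -
  assume N: "N > 0"
  have "real (N * Suc n) = real (Suc n) * real N" by (simp only: of_nat_mult mult.commute)
  moreover have "real (Suc n) > 0" "real N > 0" using N by auto
  ultimately show ?thesis by simp
qed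

lemma ratio2: "N > 0 \<Longrightarrow> real N * (1 / real (N * Suc n)) = 1 / real (Suc n)"
proof -
  assume N: "N > 0"
  have "real (N * Suc n) = real N * real (Suc n)" by (simp only: of_nat_mult)
  moreover have "real (Suc n) > 0" "real N > 0" using N by auto
  ultimately show ?thesis by simp
qed

lemma Pop_inv:
  assumes N: "N > 0"
  shows "\<alpha> (1 / real N) (Pop x) = Pop x"
proof -
  have eq: "\<alpha> (1 / real N) (PM x (N * Suc n)) = PM x (N * Suc n)" for n
    using PM_shift[of "N * Suc n" "Suc n" x] N unfolding ratio[OF N] by simp
  have "(\<lambda>n. \<alpha> (1 / real N) (PM x (N * Suc n))) \<longlonglongrightarrow> \<alpha> (1 / real N) (Pop x)"
    by (rule tendsto_a[OF PM_sub[OF N]])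
  then have "(\<lambda>n. PM x (N * Suc n)) \<longlonglongrightarrow> \<alpha> (1 / real N) (Pop x)" unfolding eq .
  then show ?thesis using PM_sub[OF N] by (rule seq_unique)
qed

definition W :: "'a \<Rightarrow> nat \<Rightarrow> 'a" where
  "W x N = \<alpha> (1 / real N) (Jop x) - Jop x + (1 / real N) *\<^sub>R Pop x"

lemma W_lim:
  assumes N: "N > 0"
  shows "(\<lambda>n. (1 / real (N * Suc n)) *\<^sub>R (\<Sum>k<Suc n. aseq x (N * Suc n) k)) \<longlonglongrightarrow> W x N"
proof -
  have eq: "(1 / real (N * Suc n)) *\<^sub>R (\<Sum>k<Suc n. aseq x (N * Suc n) k)
      = \<alpha> (1 / real N) (JM x (N * Suc n)) - JM x (N * Suc n) + (1 / real N) *\<^sub>R PM x (N * Suc n)" for n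
    using JM_shift[of "N * Suc n" "Suc n" x] N unfolding ratio[OF N] by simp
  show ?thesis unfolding eq W_def
    by (intro tendsto_add tendsto_diff tendsto_scaleR_const tendsto_a PM_sub JM_sub N)
qed

lemma W_bound:
  assumes p: "p \<in> P" and N: "N > 0" and d: "1 / real N \<le> d"
    and H: "\<And>h. 0 \<le> h \<Longrightarrow> h < d \<Longrightarrow> p (\<alpha> h x - x) \<le> e"
  shows "p (real N *\<^sub>R W x N - x) \<le> e"
proof (rule limit_le[OF tendsto_scaleR_const[OF W_lim[OF N]] _ p])
  show "\<forall>\<^sub>F n in sequentially. p (real N *\<^sub>R ((1 / real (N * Suc n)) *\<^sub>R (\<Sum>k<Suc n. aseq x (N * Suc n) k)) - x) \<le> e"
  proof (intro always_eventually allI)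
    fix n
    have eq: "real N *\<^sub>R ((1 / real (N * Suc n)) *\<^sub>R (\<Sum>k<Suc n. aseq x (N * Suc n) k)) - x
        = (1 / real (Suc n)) *\<^sub>R (\<Sum>k<Suc n. (aseq x (N * Suc n) k - x))"
    proof -
      have "real N *\<^sub>R ((1 / real (N * Suc n)) *\<^sub>R (\<Sum>k<Suc n. aseq x (N * Suc n) k))
          = (1 / real (Suc n)) *\<^sub>R (\<Sum>k<Suc n. aseq x (N * Suc n) k)"
        unfolding scaleR_scaleR ratio2[OF N] ..
      moreover have "(1 / real (Suc n)) *\<^sub>R (\<Sum>k<Suc n. (aseq x (N * Suc n) k - x))
          = (1 / real (Suc n)) *\<^sub>R (\<Sum>k<Suc n. aseq x (N * Suc n) k) - (1 / real (Suc n)) *\<^sub>R (real (Suc n) *\<^sub>R x)"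
        by (simp only: sum_subtractf scaleR_diff_right sum_constant_scaleR card_lessThan)
      moreover have "(1 / real (Suc n)) *\<^sub>R (real (Suc n) *\<^sub>R x) = x" by simp
      ultimately show ?thesis by simp
    qed
    have "p ((1 / real (Suc n)) *\<^sub>R (\<Sum>k<Suc n. (aseq x (N * Suc n) k - x)))
        \<le> (1 / real (Suc n)) * (\<Sum>k<Suc n. p (aseq x (N * Suc n) k - x))"
      unfolding sn_scaleR[OF p] abs_of_nonneg[of "1 / real (Suc n)", OF divide_nonneg_nonneg[OF zero_le_one of_nat_0_le_iff]]
      by (rule mult_left_mono[OF sn_sum[OF p]]) simp
    also have "\<dots> \<le> (1 / real (Suc n)) * (\<Sum>k<Suc n. e)"
    proof (intro mult_left_mono sum_mono)
      fix k assume k: "k \<in> {..<Suc n}"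
      have "real k / real (N * Suc n) < real (Suc n) / real (N * Suc n)"
      proof (rule divide_strict_right_mono)
        show "real k < real (Suc n)" using k by simp
        have "0 < N * Suc n" using N by simp
        then show "0 < real (N * Suc n)" by (simp only: of_nat_0_less_iff)
      qed
      also have "\<dots> = 1 / real N" using N by (rule ratio)
      finally have "real k / real (N * Suc n) < d" using d by simp
      then show "p (aseq x (N * Suc n) k - x) \<le> e"
        unfolding aseq_def by (intro H) auto
    qed auto
    also have "\<dots> = e" by simp
    finally show "p (real N *\<^sub>R ((1 / real (N * Suc n)) *\<^sub>R (\<Sum>k<Suc n. aseq x (N * Suc n) k)) - x) \<le> e"
      unfolding eq .
  qed
qed simp

lemma D_Jop: "D (Jop x) = x - Pop x"
proof -
  have conv: "(\<lambda>N. real (Suc N) *\<^sub>R W x (Suc N)) \<longlonglongrightarrow> x"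
  proof (rule tendsto_squeeze0)
    fix p e assume p: "p \<in> P" and e: "(e::real) > 0"
    have "eventually (\<lambda>h. p (\<alpha> h x - x) < e) (at (0::real))"
      using tendstoD[OF cont0 p e] .
    then obtain d where d: "d > 0" "\<And>h. h \<noteq> 0 \<Longrightarrow> dist h 0 < d \<Longrightarrow> p (\<alpha> h x - x) < e"
      unfolding eventually_at by auto
    have H: "p (\<alpha> h x - x) \<le> e" if "0 \<le> h" "h < d" for h
    proof (cases "h = 0")
      case True then show ?thesis using e sn_zero[OF p] by (simp add: a_id)
    next
      case False then show ?thesis using d(2)[of h] that by (simp add: dist_real_def)
    qed
    obtain N0 :: nat where N0: "1 / d < real N0" using reals_Archimedean2 by blast
    show "eventually (\<lambda>N. p (real (Suc N) *\<^sub>R W x (Suc N) - x) \<le> e) sequentially"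
      unfolding eventually_sequentially
    proof (intro exI[of _ N0] allI impI)
      fix N assume "N0 \<le> N"
      then have "1 / d < real (Suc N)" using N0 by linarith
      then have "1 / real (Suc N) \<le> d" using d by (simp add: field_simps)
      then show "p (real (Suc N) *\<^sub>R W x (Suc N) - x) \<le> e"
        by (intro W_bound[OF p] H) auto
    qed
  qed
  have eq: "real (Suc N) *\<^sub>R (\<alpha> (1 / real (Suc N)) (Jop x) - Jop x) = real (Suc N) *\<^sub>R W x (Suc N) - Pop x" for N
    unfolding W_def by (simp add: algebra_simps)
  have "(\<lambda>N. real (Suc N) *\<^sub>R (\<alpha> (1 / real (Suc N)) (Jop x) - Jop x)) \<longlonglongrightarrow> x - Pop x"
    unfolding eq by (intro tendsto_diff conv tendsto_const)
  then show ?thesis using D_seq[of "Jop x"] by (intro seq_unique)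
qed

lemma D_Pop: "D (Pop x) = 0"
proof -
  have "(\<lambda>N. real (Suc N) *\<^sub>R (\<alpha> (1 / real (Suc N)) (Pop x) - Pop x)) = (\<lambda>N. 0)"
    using Pop_inv[of "Suc _" x] by simp
  then have "(\<lambda>N. real (Suc N) *\<^sub>R (\<alpha> (1 / real (Suc N)) (Pop x) - Pop x)) \<longlonglongrightarrow> 0"
    by (simp add: tendsto_const)
  then show ?thesis using D_seq[of "Pop x"] by (intro seq_unique)
qed

lemma PM_D: "PM (D x) M = D (PM x M)"
  unfolding PM_def Rs_def by (simp add: D_scaleR D_sum D_a)

lemma Pop_D: "Pop (D x) = 0"
proof -
  have "(\<lambda>M. D (PM x M)) \<longlonglongrightarrow> D (Pop x)" by (rule tendsto_D[OF PM_conv])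
  then have "PM (D x) \<longlonglongrightarrow> 0" unfolding PM_D[symmetric] D_Pop by (simp add: fun_eq_iff)
  then show ?thesis using PM_conv[of "D x"] by (intro seq_unique)
qed

end


context lcs begin
lemma open_compl_zero: "open (- {0::'a})"
  unfolding open_iff
proof
  fix y :: 'a assume "y \<in> - {0}"
  then have "y \<noteq> 0" by simp
  then obtain p where p: "p \<in> P" "p y \<noteq> 0" using lc2 by blast
  then have py: "p y > 0" using sn_nonneg[OF p(1), of y] by simp
  show "\<exists>F e. finite F \<and> F \<subseteq> P \<and> e > 0 \<and> {z. \<forall>q\<in>F. q (z - y) < e} \<subseteq> - {0}"
  proof (intro exI[of _ "{p}"] exI[of _ "p y"] conjI)
    show "{z. \<forall>q\<in>{p}. q (z - y) < p y} \<subseteq> - {0}"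
      using sn_minus[OF p(1), of y] by auto
  qed (use p py in auto)
qed
end

context deriv_action begin

lemma range_D: "range D = {x. Pop x = 0}"
proof
  show "range D \<subseteq> {x. Pop x = 0}" using Pop_D by auto
  show "{x. Pop x = 0} \<subseteq> range D"
  proof
    fix x assume "x \<in> {x. Pop x = 0}"
    then have "D (Jop x) = x" using D_Jop by simp
    then show "x \<in> range D" by (metis rangeI)
  qed
qed

lemma closed_range_D: "closed (range D)"
proof -
  have "- range D = Pop -` (- {0})" unfolding range_D by auto
  moreover have "open (Pop -` (- {0}))" by (rule open_vimage[OF open_compl_zero Pop_cont])
  ultimately show ?thesis unfolding closed_def by simp
qed

lemma Pop_diff: "Pop (x - y) = Pop x - Pop y"
  using Pop_add[of x "- y"] Pop_scaleR[of "-1" y] by simp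

lemma D_minus: "D (- x) = - D x"
  using D_scaleR[of "-1" x] by simp

lemma D_diff: "D (x - y) = D x - D y"
  using D_add[of x "- y"] D_minus[of y] by simp

lemma coset_eq_iff: "coset D x = coset D y \<longleftrightarrow> x - y \<in> range D"
proof
  assume eq: "coset D x = coset D y"
  have "x \<in> coset D x" unfolding coset_def using D_zero by (metis add.right_neutral image_eqI rangeI)
  then have "x \<in> coset D y" using eq by simp
  then obtain u where "x = y + D u" unfolding coset_def by auto
  then show "x - y \<in> range D" by simp
next
  assume "x - y \<in> range D"
  then obtain w where w: "x - y = D w" by auto
  have 1: "coset D x \<subseteq> coset D y"
  proof
    fix z assume "z \<in> coset D x"
    then obtain u where "z = x + D u" unfolding coset_def by auto
    then have "z = y + D (w + u)" using w by (simp add: D_add algebra_simps)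
    then show "z \<in> coset D y" unfolding coset_def by auto
  qed
  have 2: "coset D y \<subseteq> coset D x"
  proof
    fix z assume "z \<in> coset D y"
    then obtain u where "z = y + D u" unfolding coset_def by auto
    then have "z = x + D (u - w)" using w by (simp add: D_diff algebra_simps)
    then show "z \<in> coset D x" unfolding coset_def by auto
  qed
  show "coset D x = coset D y" using 1 2 by blast
qed

definition sig :: "'a set \<Rightarrow> 'a" where "sig S = Pop (SOME x. coset D x = S)"

lemma sig_coset: "sig (coset D x) = Pop x"
proof -
  define z where "z = (SOME z. coset D z = coset D x)"
  have "coset D z = coset D x" unfolding z_def by (rule someI[of _ x]) simp
  then have "z - x \<in> range D" by (simp add: coset_eq_iff)
  then have "Pop (z - x) = 0" using range_D by auto
  then have "Pop z = Pop x" by (simp add: Pop_diff)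
  then show ?thesis unfolding sig_def z_def by simp
qed

lemma coset_Pop: "coset D (Pop x) = coset D x"
proof -
  have "Pop x - x = D (- Jop x)" using D_Jop[of x] by (simp add: D_minus)
  then show ?thesis unfolding coset_eq_iff by (metis rangeI)
qed

definition cokopen :: "'a set set \<Rightarrow> bool" where
  "cokopen S \<longleftrightarrow> S \<subseteq> range (coset D) \<and> open {x. coset D x \<in> S}"

lemma coker_eq: "coker_topology D = topology cokopen"
  unfolding coker_topology_def cokopen_def[abs_def] ..

lemma istop: "istopology cokopen"
  unfolding istopology_def
proof (intro conjI allI impI)
  fix S T assume "cokopen S" "cokopen T"
  moreover have "{x. coset D x \<in> S \<inter> T} = {x. coset D x \<in> S} \<inter> {x. coset D x \<in> T}" by auto
  ultimately show "cokopen (S \<inter> T)" unfolding cokopen_def by auto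
next
  fix K assume K: "\<forall>S\<in>K. cokopen S"
  have "{x. coset D x \<in> \<Union>K} = (\<Union>S\<in>K. {x. coset D x \<in> S})" by auto
  moreover have "open (\<Union>S\<in>K. {x. coset D x \<in> S})" using K unfolding cokopen_def by (intro open_UN) auto
  ultimately show "cokopen (\<Union>K)" using K unfolding cokopen_def by auto
qed

lemma sig_cont: "continuous_map (coker_topology D) euclidean sig"
proof -
  have oi: "openin (coker_topology D) = cokopen" unfolding coker_eq using istop by simp
  have ts: "topspace (coker_topology D) = range (coset D)"
  proof
    show "topspace (coker_topology D) \<subseteq> range (coset D)" unfolding topspace_def oi cokopen_def by auto
    have "cokopen (range (coset D))" unfolding cokopen_def by simp
    then show "range (coset D) \<subseteq> topspace (coker_topology D)" unfolding topspace_def oi by blast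
  qed
  show ?thesis unfolding continuous_map_def
  proof (intro conjI allI impI)
    show "sig \<in> topspace (coker_topology D) \<rightarrow> topspace euclidean" by simp
    fix U :: "'a set" assume "openin euclidean U"
    then have oU: "open U" by simp
    have "{x. coset D x \<in> {S \<in> topspace (coker_topology D). sig S \<in> U}} = Pop -` U"
      unfolding ts by (auto simp: sig_coset)
    moreover have "open (Pop -` U)" by (rule open_vimage[OF oU Pop_cont])
    ultimately show "openin (coker_topology D) {S \<in> topspace (coker_topology D). sig S \<in> U}"
      unfolding oi ts cokopen_def by auto
  qed
qed

end


theorem proposition9p2:
  fixes cs :: "complex \<Rightarrow> 'a::{real_vector,topological_space} \<Rightarrow> 'a"
    and b :: "'a \<Rightarrow> 'a \<Rightarrow> 'a"
    and \<alpha> :: "real \<Rightarrow> 'a \<Rightarrow> 'a"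
    and D :: "'a \<Rightarrow> 'a"
  assumes cvs: "cvs_structure cs"
    and lc: "\<exists>P. locally_convex cs P"
    and complete: "tvs_complete TYPE('a)"
    and lie: "complex_lie_algebra cs b"
    and bracket_cont: "continuous_on UNIV (\<lambda>z. b (fst z) (snd z))"
    and aut: "\<forall>t. lie_aut cs b (\<alpha> t)"
    and act0: "\<alpha> 0 = id"
    and act_add: "\<forall>s t. \<alpha> (s + t) = \<alpha> s \<circ> \<alpha> t"
    and periodic: "\<forall>t. \<alpha> (t + 1) = \<alpha> t"
    and smooth: "bastiani_smooth (\<lambda>z::real \<times> 'a. \<alpha> (fst z) (snd z))"
    and D_def: "\<forall>x. ((\<lambda>t::real. (1 / t) *\<^sub>R (\<alpha> t x - x)) \<longlongrightarrow> D x) (at 0)"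
  shows "admissible_derivation cs b D"
proof -
  obtain P where lcP: "locally_convex cs P" using lc by blast
  interpret L0: lcs cs P by unfold_locales (rule cvs, rule lcP)
  obtain d :: "nat \<Rightarrow> real \<times> 'a \<Rightarrow> (nat \<Rightarrow> real \<times> 'a) \<Rightarrow> 'a" where
    d0: "\<And>z vs. d 0 z vs = \<alpha> (fst z) (snd z)"
    and dd: "\<And>k z vs. dir_deriv (\<lambda>y. d k y vs) z (vs k) (d (Suc k) z vs)"
    and dc: "\<And>k. continuous_on UNIV (\<lambda>w. d k (fst w) (snd w))"
    using smooth unfolding bastiani_smooth_def by blast
  define vs1 :: "nat \<Rightarrow> real \<times> 'a" where "vs1 = (\<lambda>_. (1, 0))"
  have a_cont: "continuous_on UNIV (\<lambda>z::real \<times> 'a. \<alpha> (fst z) (snd z))"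
  proof -
    have "continuous_on UNIV (\<lambda>z::real \<times> 'a. d 0 (fst (z, vs1)) (snd (z, vs1)))"
      using continuous_on_compose[OF continuous_on_Pair[OF continuous_on_id continuous_on_const, of UNIV vs1] continuous_on_subset[OF dc[of 0]]]
      by (simp add: o_def)
    then show ?thesis by (simp add: d0)
  qed
  have Dd: "D x = d 1 (0, x) vs1" for x
  proof -
    have "((\<lambda>h::real. (1 / h) *\<^sub>R (d 0 ((0, x) + h *\<^sub>R vs1 0) vs1 - d 0 (0, x) vs1)) \<longlongrightarrow> d 1 (0, x) vs1) (at 0)"
      using dd[where k=0 and z="(0, x)" and vs=vs1] unfolding dir_deriv_def by simp
    then have "((\<lambda>h::real. (1 / h) *\<^sub>R (\<alpha> h x - x)) \<longlongrightarrow> d 1 (0, x) vs1) (at 0)"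
      by (simp add: d0 vs1_def act0)
    then show ?thesis using D_def L0.limit_unique by (metis at_neq_bot)
  qed
  have D_cont: "continuous_on UNIV D"
  proof -
    have "continuous_on UNIV (\<lambda>x::'a. d 1 (fst ((0::real, x), vs1)) (snd ((0::real, x), vs1)))"
      using continuous_on_compose[OF continuous_on_Pair[OF continuous_on_Pair[OF continuous_on_const continuous_on_id] continuous_on_const, of UNIV 0 vs1] continuous_on_subset[OF dc[of 1]]]
      by (simp add: o_def)
    moreover have "D = (\<lambda>x. d 1 (0, x) vs1)" using Dd by (rule ext)
    ultimately show ?thesis by simp
  qed
  have cl: "clinear_map cs (\<alpha> t)" for t using aut unfolding lie_aut_def by blast
  interpret L: deriv_action cs P \<alpha> D
  proof unfold_locales
    show "tvs_complete TYPE('a)" by (rule complete)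
    show "\<alpha> t (x + y) = \<alpha> t x + \<alpha> t y" for t x y using cl[of t] unfolding clinear_map_def by blast
    show "\<alpha> t (cs c x) = cs c (\<alpha> t x)" for t c x using cl[of t] unfolding clinear_map_def by blast
    show "\<alpha> 0 = id" by (rule act0)
    show "\<alpha> (s + t) = \<alpha> s \<circ> \<alpha> t" for s t using act_add by blast
    show "\<alpha> (t + 1) = \<alpha> t" for t using periodic by blast
    show "continuous_on UNIV (\<lambda>z. \<alpha> (fst z) (snd z))" by (rule a_cont)
    show "((\<lambda>t::real. (1 / t) *\<^sub>R (\<alpha> t x - x)) \<longlongrightarrow> D x) (at 0)" for x using D_def by blast
    show "continuous_on UNIV D" by (rule D_cont)
  qed
  have b1: "clinear_map cs (\<lambda>u. b u v)" for v using lie unfolding complex_lie_algebra_def by blast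
  have b2: "clinear_map cs (b u)" for u using lie unfolding complex_lie_algebra_def by blast
  have b_add1: "b (u + w) v = b u v + b w v" for u w v using b1[of v] unfolding clinear_map_def by blast
  have b_add2: "b v (u + w) = b v u + b v w" for u w v using b2[of v] unfolding clinear_map_def by blast
  have b_cs1: "b (cs c u) v = cs c (b u v)" for c u v using b1[of v] unfolding clinear_map_def by blast
  have b_cs2: "b v (cs c u) = cs c (b v u)" for c u v using b2[of v] unfolding clinear_map_def by blast
  have b_sc1: "b (r *\<^sub>R u) v = r *\<^sub>R b u v" for r u v using b_cs1[of "complex_of_real r" u v] by (simp only: L0.cs_real)
  have b_sc2: "b v (r *\<^sub>R u) = r *\<^sub>R b v u" for r u v using b_cs2[of v "complex_of_real r" u] by (simp only: L0.cs_real)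
  have b_diff1: "b (u - w) v = b u v - b w v" for u w v
    using b_add1[of u "- w" v] b_sc1[of "-1" w v] by simp
  have b_diff2: "b v (u - w) = b v u - b v w" for u w v
    using b_add2[of v u "- w"] b_sc2[of v "-1" w] by simp
  have a_hom: "\<alpha> t (b u v) = b (\<alpha> t u) (\<alpha> t v)" for t u v using aut unfolding lie_aut_def by blast
  have deriv: "D (b x y) = b (D x) y + b x (D y)" for x y
  proof -
    have eq: "(1 / h) *\<^sub>R (\<alpha> h (b x y) - b x y)
        = b ((1 / h) *\<^sub>R (\<alpha> h x - x)) (\<alpha> h y) + b x ((1 / h) *\<^sub>R (\<alpha> h y - y))" for h :: real
      by (simp add: a_hom b_sc1 b_sc2 b_diff1 b_diff2 scaleR_diff_right)
    have c1: "((\<lambda>h::real. ((1 / h) *\<^sub>R (\<alpha> h x - x), \<alpha> h y)) \<longlongrightarrow> (D x, y)) (at 0)"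
      by (rule tendsto_Pair[OF L.D_lim L.cont0])
    have t1: "((\<lambda>h::real. b ((1 / h) *\<^sub>R (\<alpha> h x - x)) (\<alpha> h y)) \<longlongrightarrow> b (D x) y) (at 0)"
      using continuous_on_tendsto_compose[OF bracket_cont c1] by simp
    have c2: "((\<lambda>h::real. (x, (1 / h) *\<^sub>R (\<alpha> h y - y))) \<longlongrightarrow> (x, D y)) (at 0)"
      by (rule tendsto_Pair[OF tendsto_const L.D_lim])
    have t2: "((\<lambda>h::real. b x ((1 / h) *\<^sub>R (\<alpha> h y - y))) \<longlongrightarrow> b x (D y)) (at 0)"
      using continuous_on_tendsto_compose[OF bracket_cont c2] by simp
    have "((\<lambda>h::real. (1 / h) *\<^sub>R (\<alpha> h (b x y) - b x y)) \<longlongrightarrow> b (D x) y + b x (D y)) (at 0)"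
      unfolding eq by (rule L0.tendsto_add[OF t1 t2])
    then show ?thesis using L.D_lim[of "b x y"] L0.limit_unique by (metis at_neq_bot)
  qed
  show ?thesis
    unfolding admissible_derivation_def
  proof (intro conjI allI)
    show "clinear_map cs D" unfolding clinear_map_def using L.D_add L.D_cs by blast
    show "continuous_on UNIV D" by (rule D_cont)
    show "D (b x y) = b (D x) y + b x (D y)" for x y by (rule deriv)
    show "closed (range D)" by (rule L.closed_range_D)
    show "\<exists>I. (\<forall>y\<in>range D. \<forall>z\<in>range D. I (y + z) = I y + I z) \<and>
          (\<forall>c. \<forall>y\<in>range D. I (cs c y) = cs c (I y)) \<and>
          continuous_on (range D) I \<and>
          (\<forall>y\<in>range D. D (I y) = y)"
    proof (intro exI[of _ L.Jop] conjI ballI allI)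
      show "L.Jop (y + z) = L.Jop y + L.Jop z" for y z by (rule L.Jop_add)
      show "L.Jop (cs c y) = cs c (L.Jop y)" for c y by (rule L.Jop_cs)
      show "continuous_on (range D) L.Jop" using L.Jop_cont by (rule continuous_on_subset) simp
      fix y assume "y \<in> range D"
      then have "L.Pop y = 0" using L.range_D by auto
      then show "D (L.Jop y) = y" using L.D_Jop[of y] by simp
    qed
    show "\<exists>\<sigma>. (\<forall>x y. \<sigma> (coset D (x + y)) = \<sigma> (coset D x) + \<sigma> (coset D y)) \<and>
          (\<forall>c x. \<sigma> (coset D (cs c x)) = cs c (\<sigma> (coset D x))) \<and>
          continuous_map (coker_topology D) euclidean \<sigma> \<and>
          (\<forall>x. coset D (\<sigma> (coset D x)) = coset D x)"
    proof (intro exI[of _ L.sig] conjI allI)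
      show "L.sig (coset D (x + y)) = L.sig (coset D x) + L.sig (coset D y)" for x y
        by (simp add: L.sig_coset L.Pop_add)
      show "L.sig (coset D (cs c x)) = cs c (L.sig (coset D x))" for c x
        by (simp add: L.sig_coset L.Pop_cs)
      show "continuous_map (coker_topology D) euclidean L.sig" by (rule L.sig_cont)
      show "coset D (L.sig (coset D x)) = coset D x" for x
        by (simp add: L.sig_coset L.coset_Pop)
    qed
  qed
qed


end
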